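(* Let $\mathbf{M}$ be a compact smooth submanifold without boundary of $\mathbf{R}^s$ with cutlocus $\mathbf{C}$ and nearest-point mapping $\pi$. Suppose $t_0,t_1\notin\mathbf{C}$ and $\pi(t_0)=\pi(t_1)=\mu\in\mathbf{M}$. Then for every $\alpha\in[0,1]$, the point $t_\alpha=(1-\alpha)t_0+\alpha t_1$ satisfies $t_\alpha\notin\mathbf{C}$ and $\pi(t_\alpha)=\mu$. In other words, $\pi^{-1}\{\mu\}\setminus\mathbf{C}$ is convex.
   Context: The cutlocus $\mathbf{C}$ is the set of $x\in\mathbf{R}^s$ such that the minimizer of $L_x(\mu)=\|\mu-x\|^2$ over $\mathbf{M}$ is not unique, or $L_x$ has a degenerate second derivative (Hessian) at its minimizer; for $x\notin\mathbf{C}$, $\pi(x)=\arg\min_{\mu\in\mathbf{M}}\|\mu-x\|$. *)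

theory Defs
  imports "HOL-Analysis.Analysis"
begin

fun dd :: "'a::real_normed_vector list \<Rightarrow> ('a \<Rightarrow> 'b::real_normed_vector) \<Rightarrow> 'a \<Rightarrow> 'b" where
  "dd [] f = f"
| "dd (v # vs) f = (\<lambda>x. frechet_derivative (dd vs f) (at x) v)"

definition smooth_on :: "'a::real_normed_vector set \<Rightarrow> ('a \<Rightarrow> 'b::real_normed_vector) \<Rightarrow> bool" where
  "smooth_on U f \<longleftrightarrow> (\<forall>vs. \<forall>x\<in>U. dd vs f differentiable (at x))"

definition local_param ::
  "'a::euclidean_space set \<Rightarrow> 'd::euclidean_space set \<Rightarrow> ('d \<Rightarrow> 'a) \<Rightarrow> bool" where
  "local_param M V \<psi> \<longleftrightarrow> open V \<and> smooth_on V \<psi>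
     \<and> (\<forall>v\<in>V. inj (frechet_derivative \<psi> (at v)))
     \<and> (\<exists>W g. open W \<and> homeomorphism V (M \<inter> W) \<psi> g)"

text \<open>M is a smooth submanifold without boundary of dimension DIM('d).\<close>
definition smooth_submanifold :: "'a::euclidean_space set \<Rightarrow> 'd::euclidean_space itself \<Rightarrow> bool" where
  "smooth_submanifold M _ \<longleftrightarrow>
     (\<forall>p\<in>M. \<exists>V (\<psi>::'d \<Rightarrow> 'a). local_param M V \<psi> \<and> p \<in> \<psi> ` V)"

definition is_nearest :: "'a::euclidean_space set \<Rightarrow> 'a \<Rightarrow> 'a \<Rightarrow> bool" where
  "is_nearest M x \<mu> \<longleftrightarrow> \<mu> \<in> M \<and> (\<forall>\<nu>\<in>M. (norm (\<mu> - x))\<^sup>2 \<le> (norm (\<nu> - x))\<^sup>2)"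

definition hessian_degenerate :: "('d::euclidean_space \<Rightarrow> real) \<Rightarrow> 'd \<Rightarrow> bool" where
  "hessian_degenerate g v \<longleftrightarrow> (\<exists>a. a \<noteq> 0 \<and> (\<forall>b. dd [b, a] g v = 0))"

definition cutlocus :: "'a::euclidean_space set \<Rightarrow> 'd::euclidean_space itself \<Rightarrow> 'a set" where
  "cutlocus M _ = {x. \<not> (\<exists>!\<mu>. is_nearest M x \<mu>)
      \<or> (\<exists>\<mu> V (\<psi>::'d \<Rightarrow> 'a) v. is_nearest M x \<mu> \<and> local_param M V \<psi> \<and> v \<in> V \<and> \<psi> v = \<mu>
            \<and> hessian_degenerate (\<lambda>u. (norm (\<psi> u - x))\<^sup>2) v)}"

definition nearest_point :: "'a::euclidean_space set \<Rightarrow> 'a \<Rightarrow> 'a" where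
  "nearest_point M x = (THE \<mu>. is_nearest M x \<mu>)"

end

theory Submission
  imports Defs
begin

lemma mvt_line2:
  fixes F :: "'d::real_normed_vector \<Rightarrow> real"
  assumes s: "0 < s"
    and der: "\<And>t. 0 \<le> t \<Longrightarrow> t \<le> s \<Longrightarrow> (F has_derivative F' t) (at (p + t *\<^sub>R q))"
  shows "\<exists>\<xi>. 0 < \<xi> \<and> \<xi> < s \<and> F (p + s *\<^sub>R q) - F p = s * F' \<xi> q"
proof -
  have "\<And>t. 0 \<le> t \<Longrightarrow> t \<le> s \<Longrightarrow>
     ((\<lambda>t. F (p + t *\<^sub>R q)) has_derivative (\<lambda>h. F' t (h *\<^sub>R q))) (at t within {0..s})"
  proof -
    fix t assume t: "0 \<le> t" "t \<le> s"
    have l: "((\<lambda>t. p + t *\<^sub>R q) has_derivative (\<lambda>h. h *\<^sub>R q)) (at t)"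
      by (auto intro!: derivative_eq_intros)
    have "((\<lambda>t. F (p + t *\<^sub>R q)) has_derivative (\<lambda>h. F' t (h *\<^sub>R q))) (at t)"
      using has_derivative_compose[OF l der[OF t]] by (simp add: o_def)
    then show "((\<lambda>t. F (p + t *\<^sub>R q)) has_derivative (\<lambda>h. F' t (h *\<^sub>R q))) (at t within {0..s})"
      by (rule has_derivative_at_withinI)
  qed
  from mvt_simple[OF s this] obtain x where x: "x \<in> {0<..<s}"
    "F (p + s *\<^sub>R q) - F (p + 0 *\<^sub>R q) = F' x ((s - 0) *\<^sub>R q)" by blast
  have "bounded_linear (F' x)" using der[of x] x by (auto dest: has_derivative_bounded_linear)
  then have "F' x (s *\<^sub>R q) = s * F' x q"
    using linear_cmul[OF bounded_linear.linear[OF \<open>bounded_linear (F' x)\<close>]] by simp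
  with x show ?thesis by auto
qed

lemma lin_scale:
  assumes "bounded_linear L" shows "L (c *\<^sub>R x) = c *\<^sub>R L x"
  using linear_cmul[OF bounded_linear.linear[OF assms]] by simp

lemma schwarz_est:
  fixes f :: "'d::real_normed_vector \<Rightarrow> real"
  assumes V: "open V" "v \<in> V" and df: "\<And>u. u \<in> V \<Longrightarrow> f differentiable at u"
    and dg: "(\<lambda>u. frechet_derivative f (at u) a) differentiable at v" and e: "e > 0"
  shows "\<exists>r>0. \<forall>s. 0 < s \<and> s < r \<longrightarrow>
     \<bar>(f (v + s *\<^sub>R a + s *\<^sub>R b) - f (v + s *\<^sub>R b) - f (v + s *\<^sub>R a) + f v)
       - s^2 * frechet_derivative (\<lambda>u. frechet_derivative f (at u) a) (at v) b\<bar>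
      \<le> e * s^2 * (2 * norm a + norm b)"
proof -
  define g where "g = (\<lambda>u. frechet_derivative f (at u) a)"
  define D where "D = frechet_derivative g (at v)"
  have gD: "(g has_derivative D) (at v)" using dg unfolding g_def D_def by (simp add: frechet_derivative_works)
  then have blD: "bounded_linear D" by (rule has_derivative_bounded_linear)
  from gD[unfolded has_derivative_at_alt] e obtain d where d: "d > 0"
    "\<And>y. norm (y - v) < d \<Longrightarrow> norm (g y - g v - D (y - v)) \<le> e * norm (y - v)" by blast
  from V obtain r0 where r0: "r0 > 0" "ball v r0 \<subseteq> V" by (meson openE)
  define K where "K = norm a + norm b + 1"
  have K: "K > 0" unfolding K_def by (simp add: add_nonneg_pos)
  define r where "r = min d r0 / K"
  have r: "r > 0" using d r0 K by (simp add: r_def)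
  have near: "norm (t *\<^sub>R a + s' *\<^sub>R b) < min d r0"
    if "0 \<le> t" "t \<le> s" "0 \<le> s'" "s' \<le> s" "s < r" for t s' s
  proof -
    have "norm (t *\<^sub>R a + s' *\<^sub>R b) \<le> t * norm a + s' * norm b"
      using norm_triangle_ineq[of "t *\<^sub>R a" "s' *\<^sub>R b"] that by simp
    also have "\<dots> \<le> s * norm a + s * norm b"
      using that by (intro add_mono mult_right_mono) auto
    also have "\<dots> \<le> s * K" using that unfolding K_def by (simp add: algebra_simps)
    also have "\<dots> < r * K" using that K by simp
    also have "r * K = min d r0" using K by (simp add: r_def)
    finally show ?thesis .
  qed
  show ?thesis
  proof (intro exI[of _ r] conjI allI impI r)
    fix s assume s: "0 < s \<and> s < r"
    define F where "F = (\<lambda>u. f (u + s *\<^sub>R b) - f u)"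
    define F' where "F' = (\<lambda>t h. frechet_derivative f (at (v + t *\<^sub>R a + s *\<^sub>R b)) h
                                 - frechet_derivative f (at (v + t *\<^sub>R a)) h)"
    have inV: "v + t *\<^sub>R a + s' *\<^sub>R b \<in> V" if "0 \<le> t" "t \<le> s" "0 \<le> s'" "s' \<le> s" for t s'
    proof -
      have "norm (t *\<^sub>R a + s' *\<^sub>R b) < r0" using near[OF that] s by auto
      then have "v + t *\<^sub>R a + s' *\<^sub>R b \<in> ball v r0"
        by (subst mem_ball, subst dist_commute, simp add: dist_norm add.assoc)
      then show ?thesis using r0 by auto
    qed
    have der: "(F has_derivative F' t) (at (v + t *\<^sub>R a))" if "0 \<le> t" "t \<le> s" for t
    proof -
      have p1: "v + t *\<^sub>R a + s *\<^sub>R b \<in> V" using inV[OF that] s that by auto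
      have p0: "v + t *\<^sub>R a \<in> V" using inV[OF that, of 0] s by auto
      have h1: "(f has_derivative frechet_derivative f (at (v + t *\<^sub>R a + s *\<^sub>R b))) (at (v + t *\<^sub>R a + s *\<^sub>R b))"
        using df[OF p1] by (simp add: frechet_derivative_works)
      have h0: "(f has_derivative frechet_derivative f (at (v + t *\<^sub>R a))) (at (v + t *\<^sub>R a))"
        using df[OF p0] by (simp add: frechet_derivative_works)
      have tr: "((\<lambda>u. u + s *\<^sub>R b) has_derivative (\<lambda>h. h)) (at (v + t *\<^sub>R a))"
        by (auto intro!: derivative_eq_intros)
      have "((\<lambda>u. f (u + s *\<^sub>R b)) has_derivative frechet_derivative f (at (v + t *\<^sub>R a + s *\<^sub>R b))) (at (v + t *\<^sub>R a))"
        using has_derivative_compose[OF tr h1] by (simp add: o_def)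
      from has_derivative_diff[OF this h0] show ?thesis unfolding F_def F'_def by simp
    qed
    obtain \<xi> where xi: "0 < \<xi>" "\<xi> < s" "F (v + s *\<^sub>R a) - F v = s * F' \<xi> a"
      using mvt_line2[of s F F' v a] der s by auto
    have eqD: "F (v + s *\<^sub>R a) - F v = f (v + s *\<^sub>R a + s *\<^sub>R b) - f (v + s *\<^sub>R b) - f (v + s *\<^sub>R a) + f v"
      unfolding F_def by (simp add: algebra_simps)
    have F'g: "F' \<xi> a = g (v + \<xi> *\<^sub>R a + s *\<^sub>R b) - g (v + \<xi> *\<^sub>R a)"
      unfolding F'_def g_def by simp
    have n1: "norm (\<xi> *\<^sub>R a + s *\<^sub>R b) < d" using near[of \<xi> s s] xi s by auto
    have n0': "norm (\<xi> *\<^sub>R a + 0 *\<^sub>R b) < min d r0" using near[where t="\<xi>" and s'=0 and s=s] xi s by auto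
    have n0: "norm (\<xi> *\<^sub>R a) < d" using n0' by simp
    have e1: "\<bar>g (v + \<xi> *\<^sub>R a + s *\<^sub>R b) - g v - D (\<xi> *\<^sub>R a + s *\<^sub>R b)\<bar> \<le> e * norm (\<xi> *\<^sub>R a + s *\<^sub>R b)"
      using d(2)[of "v + \<xi> *\<^sub>R a + s *\<^sub>R b"] n1 by (simp add: add.assoc)
    have e0: "\<bar>g (v + \<xi> *\<^sub>R a) - g v - D (\<xi> *\<^sub>R a)\<bar> \<le> e * norm (\<xi> *\<^sub>R a)"
      using d(2)[of "v + \<xi> *\<^sub>R a"] n0 by simp
    have Dlin: "D (\<xi> *\<^sub>R a + s *\<^sub>R b) = D (\<xi> *\<^sub>R a) + s * D b"
      using lin_scale[OF blD] linear_add[OF bounded_linear.linear[OF blD]] by simp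
    have nb1: "norm (\<xi> *\<^sub>R a + s *\<^sub>R b) \<le> s * norm a + s * norm b"
    proof -
      have "norm (\<xi> *\<^sub>R a + s *\<^sub>R b) \<le> \<xi> * norm a + s * norm b"
        using norm_triangle_ineq[of "\<xi> *\<^sub>R a" "s *\<^sub>R b"] xi s by simp
      also have "\<dots> \<le> s * norm a + s * norm b" using xi by (intro add_mono mult_right_mono) auto
      finally show ?thesis .
    qed
    have nb0: "norm (\<xi> *\<^sub>R a) \<le> s * norm a" using xi by (simp add: mult_right_mono)
    have est: "\<bar>F' \<xi> a - s * D b\<bar> \<le> e * (s * (2 * norm a + norm b))"
    proof -
      have "\<bar>F' \<xi> a - s * D b\<bar> \<le> e * norm (\<xi> *\<^sub>R a + s *\<^sub>R b) + e * norm (\<xi> *\<^sub>R a)"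
        using e1 e0 Dlin F'g by linarith
      also have "\<dots> \<le> e * (s * norm a + s * norm b) + e * (s * norm a)"
        using nb1 nb0 e by (intro add_mono mult_left_mono) auto
      also have "\<dots> = e * (s * (2 * norm a + norm b))" by (simp add: algebra_simps)
      finally show ?thesis .
    qed
    have "\<bar>(f (v + s *\<^sub>R a + s *\<^sub>R b) - f (v + s *\<^sub>R b) - f (v + s *\<^sub>R a) + f v) - s^2 * D b\<bar>
        = s * \<bar>F' \<xi> a - s * D b\<bar>"
    proof -
      have "s * F' \<xi> a - s^2 * D b = s * (F' \<xi> a - s * D b)" by (simp add: power2_eq_square algebra_simps)
      then show ?thesis using xi(3) eqD s by (simp add: abs_mult)
    qed
    also have "\<dots> \<le> s * (e * (s * (2 * norm a + norm b)))" using est s by (simp add: mult_left_mono)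
    also have "\<dots> = e * s^2 * (2 * norm a + norm b)" by (simp add: power2_eq_square algebra_simps)
    finally show "\<bar>(f (v + s *\<^sub>R a + s *\<^sub>R b) - f (v + s *\<^sub>R b) - f (v + s *\<^sub>R a) + f v)
       - s^2 * frechet_derivative (\<lambda>u. frechet_derivative f (at u) a) (at v) b\<bar>
      \<le> e * s^2 * (2 * norm a + norm b)" unfolding D_def g_def .
  qed
qed

lemma zero_by_eps:
  fixes c K :: real
  assumes K: "K \<ge> 0" and h: "\<And>e. e > 0 \<Longrightarrow> \<bar>c\<bar> \<le> e * K"
  shows "c = 0"
proof (rule ccontr)
  assume "c \<noteq> 0"
  then have c: "\<bar>c\<bar> > 0" by simp
  have "\<bar>c\<bar> \<le> (\<bar>c\<bar> / (K + 1)) * K" using h[of "\<bar>c\<bar> / (K + 1)"] c K by simp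
  also have "\<dots> < \<bar>c\<bar>" using c K by (simp add: field_simps)
  finally show False by simp
qed

lemma schwarz:
  fixes f :: "'d::real_normed_vector \<Rightarrow> real"
  assumes V: "open V" "v \<in> V" and df: "\<And>u. u \<in> V \<Longrightarrow> f differentiable at u"
    and dg: "\<And>a. (\<lambda>u. frechet_derivative f (at u) a) differentiable at v"
  shows "frechet_derivative (\<lambda>u. frechet_derivative f (at u) a) (at v) b
       = frechet_derivative (\<lambda>u. frechet_derivative f (at u) b) (at v) a"
proof -
  define c1 where "c1 = frechet_derivative (\<lambda>u. frechet_derivative f (at u) a) (at v) b"
  define c2 where "c2 = frechet_derivative (\<lambda>u. frechet_derivative f (at u) b) (at v) a"
  have "c1 - c2 = 0"
  proof (rule zero_by_eps[of "3 * norm a + 3 * norm b"])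
    fix e :: real assume e: "e > 0"
    obtain r1 where r1: "r1 > 0" "\<forall>s. 0 < s \<and> s < r1 \<longrightarrow>
     \<bar>(f (v + s *\<^sub>R a + s *\<^sub>R b) - f (v + s *\<^sub>R b) - f (v + s *\<^sub>R a) + f v) - s^2 * c1\<bar>
      \<le> e * s^2 * (2 * norm a + norm b)"
      using schwarz_est[OF V df dg e, of a b] unfolding c1_def by blast
    obtain r2 where r2: "r2 > 0" "\<forall>s. 0 < s \<and> s < r2 \<longrightarrow>
     \<bar>(f (v + s *\<^sub>R b + s *\<^sub>R a) - f (v + s *\<^sub>R a) - f (v + s *\<^sub>R b) + f v) - s^2 * c2\<bar>
      \<le> e * s^2 * (2 * norm b + norm a)"
      using schwarz_est[OF V df dg e, of b a] unfolding c2_def by blast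
    define s where "s = min r1 r2 / 2"
    have s: "0 < s" "s < r1" "s < r2" using r1 r2 by (auto simp: s_def)
    define \<Delta> where "\<Delta> = f (v + s *\<^sub>R a + s *\<^sub>R b) - f (v + s *\<^sub>R b) - f (v + s *\<^sub>R a) + f v"
    have sw: "f (v + s *\<^sub>R b + s *\<^sub>R a) = f (v + s *\<^sub>R a + s *\<^sub>R b)" by (simp add: add_ac)
    have i1: "\<bar>\<Delta> - s^2 * c1\<bar> \<le> e * s^2 * (2 * norm a + norm b)" using r1 s unfolding \<Delta>_def by auto
    have i2: "\<bar>\<Delta> - s^2 * c2\<bar> \<le> e * s^2 * (2 * norm b + norm a)" using r2 s sw unfolding \<Delta>_def
      by (auto simp: algebra_simps)
    have "s^2 * \<bar>c1 - c2\<bar> \<le> e * s^2 * (3 * norm a + 3 * norm b)"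
    proof -
      have "(\<Delta> - s^2 * c2) - (\<Delta> - s^2 * c1) = s^2 * (c1 - c2)" by (simp add: algebra_simps)
      then have "s^2 * \<bar>c1 - c2\<bar> = \<bar>(\<Delta> - s^2 * c2) - (\<Delta> - s^2 * c1)\<bar>"
        by (simp add: abs_mult)
      also have "\<dots> \<le> \<bar>\<Delta> - s^2 * c2\<bar> + \<bar>\<Delta> - s^2 * c1\<bar>" by (rule abs_triangle_ineq4)
      also have "\<dots> \<le> e * s^2 * (2 * norm b + norm a) + e * s^2 * (2 * norm a + norm b)"
        using i1 i2 by linarith
      also have "\<dots> = e * s^2 * (3 * norm a + 3 * norm b)" by (simp add: algebra_simps)
      finally show ?thesis .
    qed
    then show "\<bar>c1 - c2\<bar> \<le> e * (3 * norm a + 3 * norm b)" using s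
      by (simp add: mult.assoc mult.left_commute[of "s^2"])
  qed simp
  then show ?thesis unfolding c1_def c2_def by simp
qed

lemma second_order_min:
  fixes f :: "'d::real_normed_vector \<Rightarrow> real"
  assumes V: "open V" "v \<in> V" and df: "\<And>u. u \<in> V \<Longrightarrow> f differentiable at u"
    and mn: "\<And>u. u \<in> V \<Longrightarrow> f v \<le> f u"
    and dg: "(\<lambda>u. frechet_derivative f (at u) a) differentiable at v"
  shows "frechet_derivative (\<lambda>u. frechet_derivative f (at u) a) (at v) a \<ge> 0"
proof -
  define g where "g = (\<lambda>u. frechet_derivative f (at u) a)"
  define D where "D = frechet_derivative g (at v)"
  have gD: "(g has_derivative D) (at v)" using dg unfolding g_def D_def by (simp add: frechet_derivative_works)
  then have blD: "bounded_linear D" by (rule has_derivative_bounded_linear)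
  have fv: "(f has_derivative frechet_derivative f (at v)) (at v)"
    using df[OF V(2)] by (simp add: frechet_derivative_works)
  have ev: "eventually (\<lambda>y. f v \<le> f y) (at v)"
    using V mn eventually_at_topological by blast
  have g0: "g v = 0" using has_derivative_local_min[OF fv ev] unfolding g_def by simp
  have "D a \<ge> - e * norm a" if e: "e > 0" for e
  proof -
    from gD[unfolded has_derivative_at_alt] e obtain d where d: "d > 0"
      "\<And>y. norm (y - v) < d \<Longrightarrow> norm (g y - g v - D (y - v)) \<le> e * norm (y - v)" by blast
    from V obtain r0 where r0: "r0 > 0" "ball v r0 \<subseteq> V" by (meson openE)
    define s where "s = min d r0 / (norm a + 1)"
    have s: "s > 0" using d r0 by (simp add: s_def add_nonneg_pos)
    have sa: "s * norm a < min d r0"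
    proof -
      have "s * norm a < s * (norm a + 1)" using s by simp
      also have "\<dots> = min d r0" unfolding s_def using norm_ge_zero[of a]
        by (smt (verit) nonzero_divide_eq_eq)
      finally show ?thesis .
    qed
    have inV: "v + t *\<^sub>R a \<in> V" if "0 \<le> t" "t \<le> s" for t
    proof -
      have "norm (t *\<^sub>R a) \<le> s * norm a" using that by (simp add: mult_right_mono)
      then have "norm (t *\<^sub>R a) < r0" using sa by simp
      then have "v + t *\<^sub>R a \<in> ball v r0"
        by (subst mem_ball, subst dist_commute, simp add: dist_norm)
      then show ?thesis using r0 by auto
    qed
    have der: "(f has_derivative frechet_derivative f (at (v + t *\<^sub>R a))) (at (v + t *\<^sub>R a))"
      if "0 \<le> t" "t \<le> s" for t
      using df[OF inV[OF that]] by (simp add: frechet_derivative_works)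
    obtain \<xi> where xi: "0 < \<xi>" "\<xi> < s" "f (v + s *\<^sub>R a) - f v = s * g (v + \<xi> *\<^sub>R a)"
      using mvt_line2[of s f "\<lambda>t. frechet_derivative f (at (v + t *\<^sub>R a))" v a] der s
      unfolding g_def by auto
    have "f (v + s *\<^sub>R a) - f v \<ge> 0" using mn[OF inV[of s]] s by simp
    then have gp: "g (v + \<xi> *\<^sub>R a) \<ge> 0" using xi s by (simp add: zero_le_mult_iff)
    have n0: "norm (\<xi> *\<^sub>R a) < d"
    proof -
      have "norm (\<xi> *\<^sub>R a) \<le> s * norm a" using xi by (simp add: mult_right_mono)
      then show ?thesis using sa by simp
    qed
    have "\<bar>g (v + \<xi> *\<^sub>R a) - g v - D (\<xi> *\<^sub>R a)\<bar> \<le> e * norm (\<xi> *\<^sub>R a)"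
      using d(2)[of "v + \<xi> *\<^sub>R a"] n0 by simp
    then have "\<xi> * D a \<ge> - (e * (\<xi> * norm a))"
      using gp g0 lin_scale[OF blD, of \<xi> a] xi by simp
    then have h: "\<xi> * (- e * norm a) \<le> \<xi> * D a" by (simp add: algebra_simps)
    show ?thesis using mult_le_cancel_left_pos[OF xi(1), of "- e * norm a" "D a"] h by simp
  qed
  then have "D a \<ge> 0"
  proof -
    assume h: "\<And>e. e > 0 \<Longrightarrow> D a \<ge> - e * norm a"
    show ?thesis
    proof (rule ccontr)
      assume "\<not> D a \<ge> 0"
      then have n: "D a < 0" by simp
      have p: "norm a + 1 > 0" using norm_ge_zero[of a] by linarith
      have "- D a / (norm a + 1) > 0" using n p by (simp add: divide_neg_pos)
      from h[OF this] have "D a \<ge> - (- D a / (norm a + 1)) * norm a" .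
      moreover have "- (- D a / (norm a + 1)) * norm a > D a"
      proof -
        have "D a * (norm a + 1) < D a * norm a" using n by (simp add: algebra_simps)
        then have "D a < D a * norm a / (norm a + 1)" using p by (simp add: pos_less_divide_eq)
        then show ?thesis by simp
      qed
      ultimately show False by simp
    qed
  qed
  then show ?thesis unfolding D_def g_def .
qed

lemma chart_facts:
  fixes \<psi> :: "'d::euclidean_space \<Rightarrow> 'a::euclidean_space"
  assumes V: "open V" "v \<in> V" and sm: "smooth_on V \<psi>"
  shows "\<And>u. u \<in> V \<Longrightarrow> (\<lambda>u. (norm (\<psi> u - y))\<^sup>2) differentiable at u"
    and "\<And>a. (\<lambda>u. frechet_derivative (\<lambda>u. (norm (\<psi> u - y))\<^sup>2) (at u) a) differentiable at v"
    and "dd [b, a] (\<lambda>u. (norm (\<psi> u - y))\<^sup>2) v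
       = 2 * inner (frechet_derivative \<psi> (at v) b) (frechet_derivative \<psi> (at v) a)
         + 2 * inner (\<psi> v - y) (dd [b, a] \<psi> v)"
proof -
  define f where "f = (\<lambda>u. (norm (\<psi> u - y))\<^sup>2)"
  have f': "f = (\<lambda>u. inner (\<psi> u - y) (\<psi> u - y))" unfolding f_def by (simp add: power2_norm_eq_inner)
  have psid: "\<psi> differentiable at u" if "u \<in> V" for u
  proof -
    have "dd [] \<psi> differentiable at u" using sm that unfolding smooth_on_def by blast
    then show ?thesis by simp
  qed
  have fder: "(f has_derivative (\<lambda>h. 2 * inner (\<psi> u - y) (frechet_derivative \<psi> (at u) h))) (at u)"
    if u: "u \<in> V" for u
  proof -
    have p: "(\<psi> has_derivative frechet_derivative \<psi> (at u)) (at u)"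
      using psid[OF u] by (simp add: frechet_derivative_works)
    have q: "((\<lambda>u. \<psi> u - y) has_derivative frechet_derivative \<psi> (at u)) (at u)"
      using has_derivative_diff[OF p has_derivative_const[of y]] by simp
    have "(f has_derivative (\<lambda>h. inner (\<psi> u - y) (frechet_derivative \<psi> (at u) h)
           + inner (frechet_derivative \<psi> (at u) h) (\<psi> u - y))) (at u)"
      unfolding f' by (rule has_derivative_inner[OF q q])
    then show ?thesis by (simp add: inner_commute)
  qed
  show d1: "\<And>u. u \<in> V \<Longrightarrow> (\<lambda>u. (norm (\<psi> u - y))\<^sup>2) differentiable at u"
    using fder unfolding f_def differentiable_def by blast
  have fdeq: "frechet_derivative f (at u) a = 2 * inner (\<psi> u - y) (frechet_derivative \<psi> (at u) a)"
    if "u \<in> V" for u a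
    using fun_cong[OF frechet_derivative_at[OF fder[OF that]], of a] by simp
  have key: "((\<lambda>u. frechet_derivative f (at u) a) has_derivative
     (\<lambda>h. 2 * (inner (\<psi> v - y) (frechet_derivative (\<lambda>x. frechet_derivative \<psi> (at x) a) (at v) h)
              + inner (frechet_derivative \<psi> (at v) h) (frechet_derivative \<psi> (at v) a)))) (at v)" for a
  proof -
    have p: "(\<psi> has_derivative frechet_derivative \<psi> (at v)) (at v)"
      using psid[OF V(2)] by (simp add: frechet_derivative_works)
    have q: "((\<lambda>u. \<psi> u - y) has_derivative frechet_derivative \<psi> (at v)) (at v)"
      using has_derivative_diff[OF p has_derivative_const[of y]] by simp
    have "(\<lambda>x. frechet_derivative \<psi> (at x) a) differentiable at v"
    proof -
      have "dd [a] \<psi> differentiable at v" using sm V(2) unfolding smooth_on_def by blast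
      then show ?thesis by simp
    qed
    then have r: "((\<lambda>x. frechet_derivative \<psi> (at x) a) has_derivative
        frechet_derivative (\<lambda>x. frechet_derivative \<psi> (at x) a) (at v)) (at v)"
      by (simp add: frechet_derivative_works)
    have "((\<lambda>u. 2 * inner (\<psi> u - y) (frechet_derivative \<psi> (at u) a)) has_derivative
      (\<lambda>h. 2 * (inner (\<psi> v - y) (frechet_derivative (\<lambda>x. frechet_derivative \<psi> (at x) a) (at v) h)
              + inner (frechet_derivative \<psi> (at v) h) (frechet_derivative \<psi> (at v) a)))) (at v)"
      by (rule has_derivative_mult_right[OF has_derivative_inner[OF q r]])
    then show ?thesis
      by (rule has_derivative_transform_within_open[OF _ V]) (simp add: fdeq)
  qed
  show "\<And>a. (\<lambda>u. frechet_derivative (\<lambda>u. (norm (\<psi> u - y))\<^sup>2) (at u) a) differentiable at v"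
    using key unfolding f_def differentiable_def by blast
  have "dd [b, a] f v = 2 * (inner (\<psi> v - y) (frechet_derivative (\<lambda>x. frechet_derivative \<psi> (at x) a) (at v) b)
              + inner (frechet_derivative \<psi> (at v) b) (frechet_derivative \<psi> (at v) a))"
    using frechet_derivative_at[OF key[of a]] by (simp add: fun_eq_iff)
  then show "dd [b, a] (\<lambda>u. (norm (\<psi> u - y))\<^sup>2) v
       = 2 * inner (frechet_derivative \<psi> (at v) b) (frechet_derivative \<psi> (at v) a)
         + 2 * inner (\<psi> v - y) (dd [b, a] \<psi> v)"
    unfolding f_def by (simp add: algebra_simps)
qed

lemma psd_kernel:
  fixes H :: "'d::real_vector \<Rightarrow> 'd \<Rightarrow> real"
  assumes add: "\<And>x y w. H (x + y) w = H x w + H y w"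
    and scl: "\<And>r x w. H (r *\<^sub>R x) w = r * H x w"
    and sym: "\<And>x w. H x w = H w x"
    and psd: "\<And>w. H w w \<ge> 0"
    and z: "H a a = 0"
  shows "H b a = 0"
proof -
  define c where "c = H b a"
  define d where "d = H b b"
  have q: "2 * t * c + t^2 * d \<ge> 0" for t
  proof -
    have "H (a + t *\<^sub>R b) (a + t *\<^sub>R b) = H a (a + t *\<^sub>R b) + t * H b (a + t *\<^sub>R b)"
      by (simp add: add scl)
    also have "\<dots> = H (a + t *\<^sub>R b) a + t * H (a + t *\<^sub>R b) b" by (simp add: sym[of a] sym[of b])
    also have "\<dots> = H a a + t * H b a + t * (H a b + t * H b b)" by (simp add: add scl)
    also have "\<dots> = 2 * t * c + t^2 * d" using z sym[of a b] unfolding c_def d_def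
      by (simp add: power2_eq_square algebra_simps)
    finally show ?thesis using psd[of "a + t *\<^sub>R b"] by simp
  qed
  define k where "k = \<bar>d\<bar> + 1"
  have k: "k > 0" unfolding k_def by (simp add: add_nonneg_pos)
  have "2 * (- c / k) * c + (- c / k)^2 * d \<ge> 0" by (rule q)
  then have "(2 * (- c / k) * c + (- c / k)^2 * d) * k^2 \<ge> 0" using k by simp
  moreover have "(2 * (- c / k) * c + (- c / k)^2 * d) * k^2 = c^2 * (d - 2 * k)"
    using k by (simp add: power2_eq_square field_simps)
  ultimately have "c^2 * (d - 2 * k) \<ge> 0" by simp
  moreover have "d - 2 * k < 0" unfolding k_def by (simp add: abs_if)
  ultimately have "c^2 \<le> 0" by (simp add: mult_le_0_iff zero_le_mult_iff)
  then show ?thesis unfolding c_def by simp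
qed

lemma hess_psd:
  fixes \<psi> :: "'d::euclidean_space \<Rightarrow> 'a::euclidean_space"
  assumes V: "open V" "v \<in> V" and sm: "smooth_on V \<psi>"
    and mn: "\<And>u. u \<in> V \<Longrightarrow> (norm (\<psi> v - y))\<^sup>2 \<le> (norm (\<psi> u - y))\<^sup>2"
  shows "dd [a, a] (\<lambda>u. (norm (\<psi> u - y))\<^sup>2) v \<ge> 0"
  using second_order_min[OF V chart_facts(1)[OF V sm] mn chart_facts(2)[OF V sm]] by simp

lemma hess_zero_degenerate:
  fixes \<psi> :: "'d::euclidean_space \<Rightarrow> 'a::euclidean_space"
  assumes V: "open V" "v \<in> V" and sm: "smooth_on V \<psi>"
    and mn: "\<And>u. u \<in> V \<Longrightarrow> (norm (\<psi> v - y))\<^sup>2 \<le> (norm (\<psi> u - y))\<^sup>2"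
    and a: "a \<noteq> 0" and z: "dd [a, a] (\<lambda>u. (norm (\<psi> u - y))\<^sup>2) v = 0"
  shows "hessian_degenerate (\<lambda>u. (norm (\<psi> u - y))\<^sup>2) v"
proof -
  define f where "f = (\<lambda>u. (norm (\<psi> u - y))\<^sup>2)"
  define H where "H = (\<lambda>b w. frechet_derivative (\<lambda>u. frechet_derivative f (at u) w) (at v) b)"
  have Hdd: "dd [b, w] f v = H b w" for b w unfolding H_def by simp
  have lin: "linear (\<lambda>b. H b w)" for w
    unfolding H_def f_def by (rule linear_frechet_derivative[OF chart_facts(2)[OF V sm]])
  have "H b a = 0" for b
  proof (rule psd_kernel[of H])
    show "H (x + y) w = H x w + H y w" for x y w using linear_add[OF lin[of w]] by simp
    show "H (r *\<^sub>R x) w = r * H x w" for r x w using linear_cmul[OF lin[of w]] by simp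
    show "H x w = H w x" for x w unfolding H_def f_def
      by (rule schwarz[OF V chart_facts(1)[OF V sm] chart_facts(2)[OF V sm]])
    show "H w w \<ge> 0" for w using hess_psd[OF V sm mn, of w] Hdd unfolding f_def by simp
    show "H a a = 0" using z Hdd unfolding f_def by simp
  qed
  then show ?thesis using a Hdd unfolding hessian_degenerate_def f_def by metis
qed

lemma dist_identity:
  fixes n m p q :: "'a::real_inner" and \<alpha> :: real
  shows "(norm (n - ((1 - \<alpha>) *\<^sub>R p + \<alpha> *\<^sub>R q)))\<^sup>2 - (norm (m - ((1 - \<alpha>) *\<^sub>R p + \<alpha> *\<^sub>R q)))\<^sup>2
    = (1 - \<alpha>) * ((norm (n - p))\<^sup>2 - (norm (m - p))\<^sup>2) + \<alpha> * ((norm (n - q))\<^sup>2 - (norm (m - q))\<^sup>2)"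
  by (simp add: power2_norm_eq_inner inner_diff_left inner_diff_right inner_add_left inner_add_right
      inner_commute algebra_simps)

lemma nearest_of_eq:
  assumes "is_nearest M t \<mu>" "\<nu> \<in> M" "(norm (\<nu> - t))\<^sup>2 \<le> (norm (\<mu> - t))\<^sup>2"
  shows "is_nearest M t \<nu>"
  using assms unfolding is_nearest_def by (meson order_trans)

theorem lemma3p3:
  fixes M :: "'a::euclidean_space set" and t0 t1 \<mu> :: 'a and \<alpha> :: real
  assumes "compact M"
    and "smooth_submanifold M TYPE('d::euclidean_space)"
    and "t0 \<notin> cutlocus M TYPE('d)" and "t1 \<notin> cutlocus M TYPE('d)"
    and "nearest_point M t0 = \<mu>" and "nearest_point M t1 = \<mu>"
    and "\<alpha> \<in> {0..1}"
  shows "(1 - \<alpha>) *\<^sub>R t0 + \<alpha> *\<^sub>R t1 \<notin> cutlocus M TYPE('d)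
       \<and> nearest_point M ((1 - \<alpha>) *\<^sub>R t0 + \<alpha> *\<^sub>R t1) = \<mu>"
proof -
  define x where "x = (1 - \<alpha>) *\<^sub>R t0 + \<alpha> *\<^sub>R t1"
  have a01: "0 \<le> \<alpha>" "\<alpha> \<le> 1" using assms(7) by auto
  have u0: "\<exists>!\<mu>. is_nearest M t0 \<mu>" and nd0: "\<And>\<mu> V (\<psi>::'d \<Rightarrow> 'a) v. is_nearest M t0 \<mu> \<Longrightarrow> local_param M V \<psi>
     \<Longrightarrow> v \<in> V \<Longrightarrow> \<psi> v = \<mu> \<Longrightarrow> \<not> hessian_degenerate (\<lambda>u. (norm (\<psi> u - t0))\<^sup>2) v"
    using assms(3) unfolding cutlocus_def by blast+
  have u1: "\<exists>!\<mu>. is_nearest M t1 \<mu>" and nd1: "\<And>\<mu> V (\<psi>::'d \<Rightarrow> 'a) v. is_nearest M t1 \<mu> \<Longrightarrow> local_param M V \<psi>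
     \<Longrightarrow> v \<in> V \<Longrightarrow> \<psi> v = \<mu> \<Longrightarrow> \<not> hessian_degenerate (\<lambda>u. (norm (\<psi> u - t1))\<^sup>2) v"
    using assms(4) unfolding cutlocus_def by blast+
  have n0: "is_nearest M t0 \<mu>" using theI'[OF u0] assms(5) unfolding nearest_point_def by simp
  have n1: "is_nearest M t1 \<mu>" using theI'[OF u1] assms(6) unfolding nearest_point_def by simp
  have ident: "(norm (\<nu> - x))\<^sup>2 - (norm (\<mu> - x))\<^sup>2
    = (1 - \<alpha>) * ((norm (\<nu> - t0))\<^sup>2 - (norm (\<mu> - t0))\<^sup>2) + \<alpha> * ((norm (\<nu> - t1))\<^sup>2 - (norm (\<mu> - t1))\<^sup>2)" for \<nu>
    unfolding x_def by (rule dist_identity)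
  have nx: "is_nearest M x \<mu>"
    unfolding is_nearest_def
  proof (intro conjI ballI)
    show "\<mu> \<in> M" using n0 unfolding is_nearest_def by simp
    fix \<nu> assume \<nu>: "\<nu> \<in> M"
    have "(norm (\<nu> - t0))\<^sup>2 - (norm (\<mu> - t0))\<^sup>2 \<ge> 0" "(norm (\<nu> - t1))\<^sup>2 - (norm (\<mu> - t1))\<^sup>2 \<ge> 0"
      using n0 n1 \<nu> unfolding is_nearest_def by auto
    then have "(norm (\<nu> - x))\<^sup>2 - (norm (\<mu> - x))\<^sup>2 \<ge> 0" using ident[of \<nu>] a01 by simp
    then show "(norm (\<mu> - x))\<^sup>2 \<le> (norm (\<nu> - x))\<^sup>2" by simp
  qed
  have uniq: "\<nu> = \<mu>" if nu: "is_nearest M x \<nu>" for \<nu>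
  proof -
    have \<nu>M: "\<nu> \<in> M" using nu unfolding is_nearest_def by simp
    have "(norm (\<nu> - x))\<^sup>2 \<le> (norm (\<mu> - x))\<^sup>2" using nu nx unfolding is_nearest_def by auto
    then have le: "(1 - \<alpha>) * ((norm (\<nu> - t0))\<^sup>2 - (norm (\<mu> - t0))\<^sup>2) + \<alpha> * ((norm (\<nu> - t1))\<^sup>2 - (norm (\<mu> - t1))\<^sup>2) \<le> 0"
      using ident[of \<nu>] by linarith
    have d0: "(norm (\<nu> - t0))\<^sup>2 - (norm (\<mu> - t0))\<^sup>2 \<ge> 0" and d1: "(norm (\<nu> - t1))\<^sup>2 - (norm (\<mu> - t1))\<^sup>2 \<ge> 0"
      using n0 n1 \<nu>M unfolding is_nearest_def by auto
    show ?thesis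
    proof (cases "\<alpha> < 1")
      case True
      have "\<alpha> * ((norm (\<nu> - t1))\<^sup>2 - (norm (\<mu> - t1))\<^sup>2) \<ge> 0" using d1 a01 by simp
      then have "(1 - \<alpha>) * ((norm (\<nu> - t0))\<^sup>2 - (norm (\<mu> - t0))\<^sup>2) \<le> 0" using le by linarith
      then have "(norm (\<nu> - t0))\<^sup>2 - (norm (\<mu> - t0))\<^sup>2 \<le> 0" using True by (simp add: mult_le_0_iff)
      then have "is_nearest M t0 \<nu>" using nearest_of_eq[OF n0 \<nu>M] by simp
      then show ?thesis using u0 n0 by blast
    next
      case False
      then have "\<alpha> = 1" using a01 by simp
      then have "(norm (\<nu> - t1))\<^sup>2 - (norm (\<mu> - t1))\<^sup>2 \<le> 0" using le by simp
      then have "is_nearest M t1 \<nu>" using nearest_of_eq[OF n1 \<nu>M] by simp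
      then show ?thesis using u1 n1 by blast
    qed
  qed
  have ux: "\<exists>!\<mu>. is_nearest M x \<mu>" using nx uniq by blast
  have npx: "nearest_point M x = \<mu>" unfolding nearest_point_def using nx uniq by blast
  have nodeg: False if nb: "is_nearest M x \<mu>'" "local_param M V \<psi>" "v \<in> V" "\<psi> v = \<mu>'"
      "hessian_degenerate (\<lambda>u. (norm (\<psi> u - x))\<^sup>2) v" for \<mu>' V v and \<psi> :: "'d \<Rightarrow> 'a"
  proof -
    have \<mu>': "\<mu>' = \<mu>" using uniq nb(1) by blast
    have V: "open V" and sm: "smooth_on V \<psi>" using nb(2) unfolding local_param_def by auto
    obtain W g where "homeomorphism V (M \<inter> W) \<psi> g" using nb(2) unfolding local_param_def by blast
    then have inM: "\<psi> u \<in> M" if "u \<in> V" for u using that unfolding homeomorphism_def by blast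
    have mn: "(norm (\<psi> v - y))\<^sup>2 \<le> (norm (\<psi> u - y))\<^sup>2" if "u \<in> V" "is_nearest M y \<mu>" for u y
      using that inM[OF that(1)] \<open>\<psi> v = \<mu>'\<close> \<mu>' unfolding is_nearest_def by auto
    obtain a where a: "a \<noteq> 0" "\<And>b. dd [b, a] (\<lambda>u. (norm (\<psi> u - x))\<^sup>2) v = 0"
      using nb(5) unfolding hessian_degenerate_def by blast
    have form: "dd [b, a] (\<lambda>u. (norm (\<psi> u - y))\<^sup>2) v
       = 2 * inner (frechet_derivative \<psi> (at v) b) (frechet_derivative \<psi> (at v) a)
         + 2 * inner (\<psi> v - y) (dd [b, a] \<psi> v)" for y b
      by (rule chart_facts(3)[OF V nb(3) sm])
    have aff: "dd [a, a] (\<lambda>u. (norm (\<psi> u - x))\<^sup>2) v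
      = (1 - \<alpha>) * dd [a, a] (\<lambda>u. (norm (\<psi> u - t0))\<^sup>2) v + \<alpha> * dd [a, a] (\<lambda>u. (norm (\<psi> u - t1))\<^sup>2) v"
      unfolding form x_def by (simp add: inner_diff_left inner_add_left algebra_simps)
    have p0: "dd [a, a] (\<lambda>u. (norm (\<psi> u - t0))\<^sup>2) v \<ge> 0"
      using hess_psd[OF V nb(3) sm mn] n0 by blast
    have p1: "dd [a, a] (\<lambda>u. (norm (\<psi> u - t1))\<^sup>2) v \<ge> 0"
      using hess_psd[OF V nb(3) sm mn] n1 by blast
    have z: "(1 - \<alpha>) * dd [a, a] (\<lambda>u. (norm (\<psi> u - t0))\<^sup>2) v + \<alpha> * dd [a, a] (\<lambda>u. (norm (\<psi> u - t1))\<^sup>2) v = 0"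
      using aff a(2)[of a] by simp
    show False
    proof (cases "\<alpha> < 1")
      case True
      have "\<alpha> * dd [a, a] (\<lambda>u. (norm (\<psi> u - t1))\<^sup>2) v \<ge> 0" using p1 a01 by simp
      then have "(1 - \<alpha>) * dd [a, a] (\<lambda>u. (norm (\<psi> u - t0))\<^sup>2) v \<le> 0" using z by linarith
      then have "dd [a, a] (\<lambda>u. (norm (\<psi> u - t0))\<^sup>2) v = 0" using True p0 by (simp add: mult_le_0_iff)
      then have "hessian_degenerate (\<lambda>u. (norm (\<psi> u - t0))\<^sup>2) v"
        using hess_zero_degenerate[OF V nb(3) sm _ a(1)] mn n0 by blast
      then show False using nd0[OF n0 nb(2) nb(3)] \<open>\<psi> v = \<mu>'\<close> \<mu>' by blast
    next
      case False
      then have "\<alpha> = 1" using a01 by simp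
      then have "dd [a, a] (\<lambda>u. (norm (\<psi> u - t1))\<^sup>2) v = 0" using z by simp
      then have "hessian_degenerate (\<lambda>u. (norm (\<psi> u - t1))\<^sup>2) v"
        using hess_zero_degenerate[OF V nb(3) sm _ a(1)] mn n1 by blast
      then show False using nd1[OF n1 nb(2) nb(3)] \<open>\<psi> v = \<mu>'\<close> \<mu>' by blast
    qed
  qed
  have "x \<notin> cutlocus M TYPE('d)"
    unfolding cutlocus_def using ux nodeg by blast
  then show ?thesis using npx unfolding x_def by simp
qed

end
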